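(* Let $\psi(x)=(1-|x|^2)_+^2$ on $\mathbb{R}^2$. Suppose that $w:\mathbb{R}^2\to[0,\infty)$ is locally in $L^1\cap L^\infty$, that $\int_{B(1)}w(x)\,dx\le m$ for some $m>0$, and let $\varrho,\delta\in(0,1)$. (i) There exists $H_0\in(0,1)$ such that $\int_{B(\varrho)}w(x)\,dx\le(1-\delta)m$ implies $\int_{\mathbb{R}^2}\psi(x)w(x)\,dx\le(1-H_0)m$. (ii) There exists $H_1\in(0,1)$ such that if $\int_{B(1)}w(x)\,dx\le m$ and $\int_{\mathbb{R}^2}\psi(x)w(x)\,dx\ge(1-H_1)m$, then $\int_{B(\varrho)}w(x)\,dx\ge\left(1-\frac{\delta}{2}\right)m$. (iii) If $\int_{\mathbb{R}^2}\psi(x)w(x)\,dx\le(1-H)m$ for some $H\in(0,1)$, then $\int_{B(\beta)}w(x)\,dx\le\left(1-\frac{H}{2}\right)m$ for every $\beta>0$ with $\beta^2\le\frac{H}{4}$.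
   Context: $B(r)$ denotes the open ball of radius $r$ centered at the origin of $\mathbb{R}^2$; $(s)_+=\max\{s,0\}$. *)

theory Defs
  imports "HOL-Analysis.Analysis"
begin

definition psi :: "real^2 \<Rightarrow> real" where
  "psi x = (max (1 - (norm x)\<^sup>2) 0)\<^sup>2"

definition locally_L1_Linf :: "(real^2 \<Rightarrow> real) \<Rightarrow> bool" where
  "locally_L1_Linf w \<longleftrightarrow>
     (\<forall>K. compact K \<longrightarrow> set_integrable lborel K w \<and>
        (\<exists>C. AE x in lborel. x \<in> K \<longrightarrow> \<bar>w x\<bar> \<le> C))"

end

theory Submission
  imports Defs
begin

lemma psi_le1: "psi x \<le> 1"
proof -
  have "0 \<le> max (1 - (norm x)\<^sup>2) 0" "max (1 - (norm x)\<^sup>2) 0 \<le> 1" by auto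
  then show ?thesis unfolding psi_def by (simp add: power_le_one)
qed

lemma psi_out: "norm x \<ge> 1 \<Longrightarrow> psi x = 0"
proof -
  assume "norm x \<ge> 1"
  then have "(norm x)\<^sup>2 \<ge> 1" by (simp add: one_le_power)
  then show ?thesis unfolding psi_def by simp
qed

lemma psi_mid: assumes "0 < r" "r \<le> norm x" "norm x < 1"
  shows "psi x \<le> (1 - r\<^sup>2)\<^sup>2"
proof -
  have "r\<^sup>2 \<le> (norm x)\<^sup>2" using assms by (simp add: power_mono)
  moreover have "(norm x)\<^sup>2 < 1" using assms by (simp add: power_less_one_iff abs_square_less_1)
  ultimately have "0 \<le> 1 - (norm x)\<^sup>2" "1 - (norm x)\<^sup>2 \<le> 1 - r\<^sup>2" by auto
  then show ?thesis unfolding psi_def by (simp add: power_mono)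
qed

lemma psi_in: assumes "norm x < 1"
  shows "psi x \<ge> 1 - 2 * (norm x)\<^sup>2"
proof -
  have "(norm x)\<^sup>2 < 1" using assms by (simp add: abs_square_less_1)
  then have "psi x = (1 - (norm x)\<^sup>2)\<^sup>2" unfolding psi_def by simp
  also have "\<dots> \<ge> 1 - 2 * (norm x)\<^sup>2" by (simp add: power2_eq_square algebra_simps)
  finally show ?thesis .
qed

lemma integ_facts:
  assumes "locally_L1_Linf w" "r \<le> 1"
  shows "integrable lborel (\<lambda>x. indicator (ball (0::real^2) r) x * w x)"
    and "integrable lborel (\<lambda>x. psi x * w x)"
proof -
  have K: "set_integrable lborel (cball (0::real^2) 1) w"
    using assms(1) unfolding locally_L1_Linf_def by auto
  have "set_integrable lborel (ball (0::real^2) r) w"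
    by (rule set_integrable_subset[OF K]) (use assms(2) in auto)
  then show "integrable lborel (\<lambda>x. indicator (ball (0::real^2) r) x * w x)"
    by (simp add: set_integrable_def)
  have I: "integrable lborel (\<lambda>x. indicator (cball (0::real^2) 1) x * w x)"
    using K by (simp add: set_integrable_def)
  have cp: "continuous_on UNIV psi" unfolding psi_def
    by (intro continuous_intros)
  have mp: "psi \<in> borel_measurable lborel"
    using cp by (simp add: borel_measurable_continuous_onI)
  have eq: "(\<lambda>x. psi x * w x) = (\<lambda>x. psi x * (indicator (cball (0::real^2) 1) x * w x))"
  proof
    fix x :: "real^2"
    show "psi x * w x = psi x * (indicator (cball 0 1) x * w x)"
      by (cases "norm x \<le> 1") (auto simp: indicator_def psi_out)
  qed
  have "integrable lborel (\<lambda>x. psi x * (indicator (cball (0::real^2) 1) x * w x))"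
  proof (rule Bochner_Integration.integrable_bound[OF I])
    show "(\<lambda>x. psi x * (indicator (cball (0::real^2) 1) x * w x)) \<in> borel_measurable lborel"
      using mp borel_measurable_integrable[OF I] by measurable
    show "AE x in lborel. norm (psi x * (indicator (cball (0::real^2) 1) x * w x))
        \<le> norm (indicator (cball (0::real^2) 1) x * w x)"
    proof (rule AE_I2)
      fix x :: "real^2"
      have "0 \<le> psi x" unfolding psi_def by simp
      then show "norm (psi x * (indicator (cball (0::real^2) 1) x * w x))
        \<le> norm (indicator (cball (0::real^2) 1) x * w x)"
        using psi_le1[of x] by (simp add: abs_mult mult_left_le_one_le)
    qed
  qed
  then show "integrable lborel (\<lambda>x. psi x * w x)" using eq by simp
qed

lemma key_upper:
  assumes w0: "\<forall>x. 0 \<le> w x" and L: "locally_L1_Linf w" and r: "0 < r" "r < 1"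
  shows "(LINT x|lborel. psi x * w x) \<le>
     (1 - (1 - r\<^sup>2)\<^sup>2) * (LINT x:ball 0 r|lborel. w x) + (1 - r\<^sup>2)\<^sup>2 * (LINT x:ball 0 1|lborel. w x)"
proof -
  define c where "c = (1 - r\<^sup>2)\<^sup>2"
  have c1: "c \<le> 1" unfolding c_def using r
    by (intro power_le_one) (auto simp: power_le_one)
  have Ir: "integrable lborel (\<lambda>x. indicator (ball (0::real^2) r) x * w x)"
    using integ_facts(1)[OF L] r by simp
  have I1: "integrable lborel (\<lambda>x. indicator (ball (0::real^2) 1) x * w x)"
    using integ_facts(1)[OF L] by simp
  have Ip: "integrable lborel (\<lambda>x. psi x * w x)" using integ_facts(2)[OF L, of 1] by simp
  have "(LINT x|lborel. psi x * w x) \<le> (LINT x|lborel. (1 - c) * (indicator (ball (0::real^2) r) x * w x)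
        + c * (indicator (ball (0::real^2) 1) x * w x))"
  proof (rule integral_mono)
    show "integrable lborel (\<lambda>x. (1 - c) * (indicator (ball (0::real^2) r) x * w x)
        + c * (indicator (ball (0::real^2) 1) x * w x))" using Ir I1 by simp
    show "integrable lborel (\<lambda>x. psi x * w x)" by fact
    fix x :: "real^2"
    have wx: "0 \<le> w x" using w0 by simp
    show "psi x * w x \<le> (1 - c) * (indicator (ball (0::real^2) r) x * w x)
        + c * (indicator (ball (0::real^2) 1) x * w x)"
    proof (cases "norm x < r")
      case True
      then have "norm x < 1" using r by simp
      have "psi x * w x \<le> w x" using psi_le1[of x] wx mult_right_mono[of "psi x" 1 "w x"] by simp
      then show ?thesis using True \<open>norm x < 1\<close>
        by (simp add: indicator_def algebra_simps)
    next
      case False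
      show ?thesis
      proof (cases "norm x < 1")
        case True
        have "psi x \<le> c" unfolding c_def using psi_mid[of r x] False True r by simp
        then show ?thesis using True False wx by (simp add: indicator_def mult_right_mono)
      next
        case F2: False
        then show ?thesis using False psi_out[of x] by (simp add: indicator_def)
      qed
    qed
  qed
  also have "\<dots> = (1 - c) * (LINT x|lborel. indicator (ball (0::real^2) r) x * w x)
       + c * (LINT x|lborel. indicator (ball (0::real^2) 1) x * w x)"
    using Ir I1 by simp
  finally show ?thesis unfolding c_def set_lebesgue_integral_def by simp
qed

theorem lemma2p1:
  fixes rho delta :: real
  assumes "0 < rho" "rho < 1" "0 < delta" "delta < 1"
  shows
   "(\<exists>H0. 0 < H0 \<and> H0 < 1 \<and>
      (\<forall>(w :: real^2 \<Rightarrow> real) (m :: real).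
         (\<forall>x. 0 \<le> w x) \<and> locally_L1_Linf w \<and> 0 < m \<and>
         (LINT x:ball 0 1|lborel. w x) \<le> m \<and>
         (LINT x:ball 0 rho|lborel. w x) \<le> (1 - delta) * m
         \<longrightarrow> (LINT x|lborel. psi x * w x) \<le> (1 - H0) * m))
    \<and>
    (\<exists>H1. 0 < H1 \<and> H1 < 1 \<and>
      (\<forall>(w :: real^2 \<Rightarrow> real) (m :: real).
         (\<forall>x. 0 \<le> w x) \<and> locally_L1_Linf w \<and> 0 < m \<and>
         (LINT x:ball 0 1|lborel. w x) \<le> m \<and>
         (LINT x|lborel. psi x * w x) \<ge> (1 - H1) * m
         \<longrightarrow> (LINT x:ball 0 rho|lborel. w x) \<ge> (1 - delta / 2) * m))
    \<and>
    (\<forall>(w :: real^2 \<Rightarrow> real) (m :: real) (H :: real) (beta :: real).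
         (\<forall>x. 0 \<le> w x) \<and> locally_L1_Linf w \<and> 0 < m \<and>
         (LINT x:ball 0 1|lborel. w x) \<le> m \<and>
         0 < H \<and> H < 1 \<and>
         (LINT x|lborel. psi x * w x) \<le> (1 - H) * m \<and>
         0 < beta \<and> beta\<^sup>2 \<le> H / 4
         \<longrightarrow> (LINT x:ball 0 beta|lborel. w x) \<le> (1 - H / 2) * m)"
proof -
  define c where "c = (1 - rho\<^sup>2)\<^sup>2"
  define s where "s = 1 - c"
  have r2: "0 < rho\<^sup>2" "rho\<^sup>2 < 1" using assms by (auto simp: abs_square_less_1)
  have c0: "0 \<le> c" "c < 1" unfolding c_def using r2
    by (auto simp: power2_eq_square mult_less_cancel_right1 intro!: mult_le_one)
       (smt (verit) mult_less_cancel_left2)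
  have s01: "0 < s" "s < 1" unfolding s_def using c0 r2 c_def by (auto simp: power2_eq_square)
  have ku: "(LINT x|lborel. psi x * w x) \<le> s * (LINT x:ball 0 rho|lborel. w x) + c * (LINT x:ball 0 1|lborel. w x)"
    if "\<forall>x. 0 \<le> w x" "locally_L1_Linf w" for w :: "real^2 \<Rightarrow> real"
    using key_upper[OF that assms(1,2)] unfolding s_def c_def by simp
  have part1: "\<exists>H0. 0 < H0 \<and> H0 < 1 \<and>
      (\<forall>(w :: real^2 \<Rightarrow> real) (m :: real).
         (\<forall>x. 0 \<le> w x) \<and> locally_L1_Linf w \<and> 0 < m \<and>
         (LINT x:ball 0 1|lborel. w x) \<le> m \<and>
         (LINT x:ball 0 rho|lborel. w x) \<le> (1 - delta) * m
         \<longrightarrow> (LINT x|lborel. psi x * w x) \<le> (1 - H0) * m)"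
  proof (intro exI[of _ "s * delta"] conjI allI impI)
    show "0 < s * delta" using s01 assms by simp
    show "s * delta < 1" using s01 assms mult_strict_mono[of s 1 delta 1] by simp
    fix w :: "real^2 \<Rightarrow> real" and m :: real
    assume h: "(\<forall>x. 0 \<le> w x) \<and> locally_L1_Linf w \<and> 0 < m \<and>
         (LINT x:ball 0 1|lborel. w x) \<le> m \<and>
         (LINT x:ball 0 rho|lborel. w x) \<le> (1 - delta) * m"
    have "(LINT x|lborel. psi x * w x) \<le> s * (LINT x:ball 0 rho|lborel. w x) + c * (LINT x:ball 0 1|lborel. w x)"
      using ku h by blast
    also have "\<dots> \<le> s * ((1 - delta) * m) + c * m"
      using h s01 c0 by (intro add_mono mult_left_mono) auto
    also have "\<dots> = (1 - s * delta) * m" unfolding s_def by (simp add: algebra_simps)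
    finally show "(LINT x|lborel. psi x * w x) \<le> (1 - s * delta) * m" .
  qed
  have part2: "\<exists>H1. 0 < H1 \<and> H1 < 1 \<and>
      (\<forall>(w :: real^2 \<Rightarrow> real) (m :: real).
         (\<forall>x. 0 \<le> w x) \<and> locally_L1_Linf w \<and> 0 < m \<and>
         (LINT x:ball 0 1|lborel. w x) \<le> m \<and>
         (LINT x|lborel. psi x * w x) \<ge> (1 - H1) * m
         \<longrightarrow> (LINT x:ball 0 rho|lborel. w x) \<ge> (1 - delta / 2) * m)"
  proof (intro exI[of _ "s * delta / 4"] conjI allI impI)
    show "0 < s * delta / 4" using s01 assms by simp
    have "s * delta < 1" using s01 assms mult_strict_mono[of s 1 delta 1] by simp
    then show "s * delta / 4 < 1" by simp
    fix w :: "real^2 \<Rightarrow> real" and m :: real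
    assume h: "(\<forall>x. 0 \<le> w x) \<and> locally_L1_Linf w \<and> 0 < m \<and>
         (LINT x:ball 0 1|lborel. w x) \<le> m \<and>
         (LINT x|lborel. psi x * w x) \<ge> (1 - s * delta / 4) * m"
    show "(LINT x:ball 0 rho|lborel. w x) \<ge> (1 - delta / 2) * m"
    proof (rule ccontr)
      assume "\<not> ?thesis"
      then have a: "(LINT x:ball 0 rho|lborel. w x) < (1 - delta / 2) * m" by simp
      have "(LINT x|lborel. psi x * w x) \<le> s * (LINT x:ball 0 rho|lborel. w x) + c * (LINT x:ball 0 1|lborel. w x)"
        using ku h by blast
      also have "\<dots> < s * ((1 - delta / 2) * m) + c * m"
        using h s01 c0 a by (intro add_less_le_mono mult_strict_left_mono mult_left_mono) auto
      also have "\<dots> = (1 - s * delta / 2) * m" unfolding s_def by (simp add: algebra_simps)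
      also have "\<dots> \<le> (1 - s * delta / 4) * m" using h s01 assms by (intro mult_right_mono) auto
      finally show False using h by simp
    qed
  qed
  have part3: "\<forall>(w :: real^2 \<Rightarrow> real) (m :: real) (H :: real) (beta :: real).
         (\<forall>x. 0 \<le> w x) \<and> locally_L1_Linf w \<and> 0 < m \<and>
         (LINT x:ball 0 1|lborel. w x) \<le> m \<and>
         0 < H \<and> H < 1 \<and>
         (LINT x|lborel. psi x * w x) \<le> (1 - H) * m \<and>
         0 < beta \<and> beta\<^sup>2 \<le> H / 4
         \<longrightarrow> (LINT x:ball 0 beta|lborel. w x) \<le> (1 - H / 2) * m"
  proof (intro allI impI)
    fix w :: "real^2 \<Rightarrow> real" and m H beta :: real
    assume h: "(\<forall>x. 0 \<le> w x) \<and> locally_L1_Linf w \<and> 0 < m \<and>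
         (LINT x:ball 0 1|lborel. w x) \<le> m \<and>
         0 < H \<and> H < 1 \<and>
         (LINT x|lborel. psi x * w x) \<le> (1 - H) * m \<and>
         0 < beta \<and> beta\<^sup>2 \<le> H / 4"
    have "beta\<^sup>2 < 1" using h by simp
    then have b1: "beta \<le> 1" using h by (simp add: abs_square_less_1)
    have Ib: "integrable lborel (\<lambda>x. indicator (ball (0::real^2) beta) x * w x)"
      using integ_facts(1)[OF _ b1] h by blast
    have Ip: "integrable lborel (\<lambda>x. psi x * w x)" using integ_facts(2)[of w 1] h by blast
    have "(LINT x|lborel. (1 - H/2) * (indicator (ball (0::real^2) beta) x * w x))
        \<le> (LINT x|lborel. psi x * w x)"
    proof (rule integral_mono)
      show "integrable lborel (\<lambda>x. (1 - H/2) * (indicator (ball (0::real^2) beta) x * w x))"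
        using Ib by simp
      show "integrable lborel (\<lambda>x. psi x * w x)" by fact
      fix x :: "real^2"
      have wx: "0 \<le> w x" using h by simp
      show "(1 - H/2) * (indicator (ball (0::real^2) beta) x * w x) \<le> psi x * w x"
      proof (cases "norm x < beta")
        case True
        have "(norm x)\<^sup>2 \<le> beta\<^sup>2" using True by (simp add: power_mono)
        then have nb: "(norm x)\<^sup>2 \<le> beta\<^sup>2" .
        have "beta\<^sup>2 \<le> H / 4" using h by simp
        moreover have "1 - 2 * (norm x)\<^sup>2 \<le> psi x" using psi_in[of x] True b1 by simp
        ultimately have "1 - H/2 \<le> psi x" using nb by linarith
        then show ?thesis using True wx by (simp add: indicator_def mult_right_mono)
      next
        case False
        have "0 \<le> psi x" unfolding psi_def by simp
        then show ?thesis using False wx by (simp add: indicator_def)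
      qed
    qed
    then have A: "(1 - H/2) * (LINT x:ball 0 beta|lborel. w x) \<le> (1 - H) * m"
      using h unfolding set_lebesgue_integral_def by simp
    show "(LINT x:ball 0 beta|lborel. w x) \<le> (1 - H / 2) * m"
    proof (rule ccontr)
      assume "\<not> ?thesis"
      then have "(1 - H / 2) * m < (LINT x:ball 0 beta|lborel. w x)" by simp
      then have "(1 - H/2) * ((1 - H / 2) * m) < (1 - H/2) * (LINT x:ball 0 beta|lborel. w x)"
        using h by (intro mult_strict_left_mono) auto
      moreover have "(1 - H) * m \<le> (1 - H/2) * ((1 - H / 2) * m)"
      proof -
        have "(1 - H) \<le> (1 - H/2) * (1 - H / 2)" by (simp add: algebra_simps)
        then show ?thesis using h by (simp add: mult_right_mono mult.assoc[symmetric])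
      qed
      ultimately show False using A by simp
    qed
  qed
  show ?thesis using part1 part2 part3 by blast
qed

end
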